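(* For every triangle $ABC$ with $AB = AC$ and $AC > BC$ (i.e. $b = c > a$), the following triangle centers are at strictly increasing distances from vertex $A$, in this order (each listed center is strictly closer to $A$ than the next one): $$X_{20}, X_{22}, X_8, X_3, X_9, X_{10}, X_{21}, X_2, X_5, X_{12}, X_{17}, X_1, X_{13}, X_7, X_6, X_4, X_{27}, X_{19}, X_{28}, X_{25}, X_{11}, X_{14}, X_{16}, X_{23}.$$ Equivalently, in the isosceles order $\prec$, $X_{20}\prec X_{22}\prec X_8\prec X_3\prec X_9\prec X_{10}\prec X_{21}\prec X_2\prec X_5\prec X_{12}\prec X_{17}\prec X_1\prec X_{13}\prec X_7\prec X_6\prec X_4\prec X_{27}\prec X_{19}\prec X_{28}\prec X_{25}\prec X_{11}\prec X_{14}\prec X_{16}\prec X_{23}$.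
   Context: $X_n$ denotes the $n$-th triangle center listed in Kimberling's Encyclopedia of Triangle Centers (ETC), given there by its barycentric coordinates as functions of the side lengths $a=BC$, $b=CA$, $c=AB$. An isosceles triangle $ABC$ with base $BC$ (so $b=c$) is called tall if $b>a$. The isosceles order on triangle centers is defined by: $P\prec Q$ if $P$ is closer to $A$ than $Q$ in every tall isosceles triangle $ABC$ with base $BC$. *)

theory Defs
  imports "HOL-Analysis.Analysis"
begin

text \<open>Triangle centers from Kimberling's ETC, given by the first barycentric
coordinate f(a,b,c) as a function of the side lengths a = BC, b = CA, c = AB;
the full barycentrics are f(a,b,c) : f(b,c,a) : f(c,a,b).\<close>

definition tri_area :: "real \<Rightarrow> real \<Rightarrow> real \<Rightarrow> real" where
  "tri_area a b c = sqrt ((a+b+c) * (b+c-a) * (c+a-b) * (a+b-c)) / 4"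

definition X1 :: "real \<Rightarrow> real \<Rightarrow> real \<Rightarrow> real" where "X1 a b c = a"
definition X2 :: "real \<Rightarrow> real \<Rightarrow> real \<Rightarrow> real" where "X2 a b c = 1"
definition X3 :: "real \<Rightarrow> real \<Rightarrow> real \<Rightarrow> real" where "X3 a b c = a^2 * (b^2 + c^2 - a^2)"
definition X4 :: "real \<Rightarrow> real \<Rightarrow> real \<Rightarrow> real" where
  "X4 a b c = (a^2 + b^2 - c^2) * (a^2 - b^2 + c^2)"
definition X5 :: "real \<Rightarrow> real \<Rightarrow> real \<Rightarrow> real" where
  "X5 a b c = a^2 * (b^2 + c^2) - (b^2 - c^2)^2"
definition X6 :: "real \<Rightarrow> real \<Rightarrow> real \<Rightarrow> real" where "X6 a b c = a^2"
definition X7 :: "real \<Rightarrow> real \<Rightarrow> real \<Rightarrow> real" where "X7 a b c = 1 / (b + c - a)"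
definition X8 :: "real \<Rightarrow> real \<Rightarrow> real \<Rightarrow> real" where "X8 a b c = b + c - a"
definition X9 :: "real \<Rightarrow> real \<Rightarrow> real \<Rightarrow> real" where "X9 a b c = a * (b + c - a)"
definition X10 :: "real \<Rightarrow> real \<Rightarrow> real \<Rightarrow> real" where "X10 a b c = b + c"
definition X11 :: "real \<Rightarrow> real \<Rightarrow> real \<Rightarrow> real" where
  "X11 a b c = (b + c - a) * (b - c)^2"
definition X12 :: "real \<Rightarrow> real \<Rightarrow> real \<Rightarrow> real" where
  "X12 a b c = (b + c)^2 / (b + c - a)"
definition X13 :: "real \<Rightarrow> real \<Rightarrow> real \<Rightarrow> real" where
  "X13 a b c = a^4 - 2 * (b^2 - c^2)^2 + a^2 * (b^2 + c^2 + 4 * sqrt 3 * tri_area a b c)"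
definition X14 :: "real \<Rightarrow> real \<Rightarrow> real \<Rightarrow> real" where
  "X14 a b c = a^4 - 2 * (b^2 - c^2)^2 + a^2 * (b^2 + c^2 - 4 * sqrt 3 * tri_area a b c)"
definition X16 :: "real \<Rightarrow> real \<Rightarrow> real \<Rightarrow> real" where
  "X16 a b c = a^2 * (sqrt 3 * (a^2 - b^2 - c^2) + 4 * tri_area a b c)"
definition X17 :: "real \<Rightarrow> real \<Rightarrow> real \<Rightarrow> real" where
  "X17 a b c = 1 / (b^2 + c^2 - a^2 + 4 * sqrt 3 * tri_area a b c)"
definition X19 :: "real \<Rightarrow> real \<Rightarrow> real \<Rightarrow> real" where
  "X19 a b c = a / (b^2 + c^2 - a^2)"
definition X20 :: "real \<Rightarrow> real \<Rightarrow> real \<Rightarrow> real" where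
  "X20 a b c = 3 * a^4 - 2 * a^2 * (b^2 + c^2) - (b^2 - c^2)^2"
definition X21 :: "real \<Rightarrow> real \<Rightarrow> real \<Rightarrow> real" where
  "X21 a b c = a * (a + b) * (a + c) * (b + c - a)"
definition X22 :: "real \<Rightarrow> real \<Rightarrow> real \<Rightarrow> real" where
  "X22 a b c = a^2 * (b^4 + c^4 - a^4)"
definition X23 :: "real \<Rightarrow> real \<Rightarrow> real \<Rightarrow> real" where
  "X23 a b c = a^2 * (a^4 - b^4 - c^4 + b^2 * c^2)"
definition X25 :: "real \<Rightarrow> real \<Rightarrow> real \<Rightarrow> real" where
  "X25 a b c = a^2 / (b^2 + c^2 - a^2)"
definition X27 :: "real \<Rightarrow> real \<Rightarrow> real \<Rightarrow> real" where
  "X27 a b c = 1 / ((b + c) * (b^2 + c^2 - a^2))"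
definition X28 :: "real \<Rightarrow> real \<Rightarrow> real \<Rightarrow> real" where
  "X28 a b c = a / ((b + c) * (b^2 + c^2 - a^2))"

definition center :: "(real \<Rightarrow> real \<Rightarrow> real \<Rightarrow> real) \<Rightarrow> complex \<Rightarrow> complex \<Rightarrow> complex \<Rightarrow> complex" where
  "center f A B C =
     (let a = dist B C; b = dist C A; c = dist A B;
          u = f a b c; v = f b c a; w = f c a b
      in (of_real u * A + of_real v * B + of_real w * C) / of_real (u + v + w))"

end

theory Submission
  imports Defs
begin

definition T :: "(real \<Rightarrow> real \<Rightarrow> real \<Rightarrow> real) \<Rightarrow> real \<Rightarrow> real \<Rightarrow> real" where
  "T f a b = 2 * f b b a / (f a b b + 2 * f b b a)"

definition rr :: "real \<Rightarrow> real \<Rightarrow> real" where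
  "rr a b = sqrt 3 * sqrt (4*b^2 - a^2)"

lemma frac_eqk: "k * (y::real) = c * q \<Longrightarrow> k * x = c * p \<Longrightarrow> c \<noteq> 0 \<Longrightarrow> k \<noteq> 0 \<Longrightarrow> x / y = p / q"
  by (metis frac_eq mult_divide_mult_cancel_left)

lemma frac2:
  fixes U V x y :: real
  assumes "U \<noteq> 0" "V \<noteq> 0"
  shows "2*(y/V)/(x/U + 2*(y/V)) = 2*y*U/(x*V+2*y*U)"
proof -
  have 1: "x/U + 2*(y/V) = (x*V + 2*y*U)/(U*V)" using assms by (simp add: field_simps)
  have 2: "2*(y/V) = (2*y*U)/(U*V)" using assms by simp
  have 3: "(A/(U*V))/(B/(U*V)) = A/B" for A B using assms by simp
  show ?thesis by (subst 1, subst 2, rule 3)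
qed

lemma fl: "0 < (q1::real) \<Longrightarrow> 0 < q2 \<Longrightarrow> 0 < p2*q1 - p1*q2 \<Longrightarrow> p1/q1 < p2/q2"
  by (simp add: divide_less_eq less_divide_eq algebra_simps)

lemma LA:
  fixes A B r T :: real
  assumes "0 < A" "r^2 = T" "0 < A^2 - B^2*T"
  shows "0 < A + B*r"
proof -
  have "\<bar>B*r\<bar>^2 < A^2" using assms by (simp add: power_mult_distrib)
  then have "\<bar>B*r\<bar> < A" using assms(1) by (meson abs_ge_zero less_imp_le power_less_imp_less_base)
  then show ?thesis by (smt (verit) abs_ge_minus_self)
qed

lemma LB:
  fixes A B r T :: real
  assumes "0 < B" "0 < r" "r^2 = T" "0 < B^2*T - A^2"
  shows "0 < A + B*r"
proof -
  have "\<bar>A\<bar>^2 < (B*r)^2" using assms by (simp add: power_mult_distrib)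
  moreover have "0 \<le> B*r" using assms by simp
  ultimately have "\<bar>A\<bar> < B*r" by (meson power_less_imp_less_base)
  then show ?thesis by (smt (verit) abs_ge_minus_self)
qed

lemma frac_eq: "(y::real) = c * q \<Longrightarrow> x = c * p \<Longrightarrow> c \<noteq> 0 \<Longrightarrow> x / y = p / q"
  by simp

context fixes a b :: real assumes ab: "0 < a" "a < b"
begin

lemma D_pos: "4*b^2 - a^2 > 0"
proof -
  have "a^2 < b^2" using ab by (simp add: power_strict_mono)
  moreover have "b^2 > 0" using ab by simp
  ultimately show ?thesis by linarith
qed

lemma a2b2: "a^2 < b^2" using ab by (simp add: power_strict_mono)

lemma rr_pos: "rr a b > 0" using D_pos by (simp add: rr_def)

lemma rr_sq: "(rr a b)^2 = 3 * (4*b^2 - a^2)"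
  using D_pos by (simp add: rr_def power_mult_distrib)

lemma s_sq: "(sqrt (4*b^2 - a^2))^2 = 4*b^2 - a^2"
  using D_pos by simp

lemma area1: "4 * tri_area a b b = a * sqrt (4*b^2 - a^2)"
proof -
  have "(a+b+b)*(b+b-a)*(b+a-b)*(a+b-b) = a^2 * (4*b^2-a^2)" by algebra
  then show ?thesis using ab by (simp add: tri_area_def real_sqrt_mult)
qed
lemma area2: "4 * tri_area b b a = a * sqrt (4*b^2 - a^2)"
proof -
  have "(b+b+a)*(b+a-b)*(a+b-b)*(b+b-a) = a^2 * (4*b^2-a^2)" by algebra
  then show ?thesis using ab by (simp add: tri_area_def real_sqrt_mult)
qed
lemma area3: "4 * tri_area b a b = a * sqrt (4*b^2 - a^2)"
proof -
  have "(b+a+b)*(a+b-b)*(b+b-a)*(b+a-b) = a^2 * (4*b^2-a^2)" by algebra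
  then show ?thesis using ab by (simp add: tri_area_def real_sqrt_mult)
qed
lemma ar1: "4 * sqrt 3 * tri_area a b b = a * rr a b"
  using area1 unfolding rr_def by (metis mult.commute mult.left_commute)
lemma ar2: "4 * sqrt 3 * tri_area b b a = a * rr a b"
  using area2 unfolding rr_def by (metis mult.commute mult.left_commute)
lemma ar3: "4 * sqrt 3 * tri_area b a b = a * rr a b"
  using area3 unfolding rr_def by (metis mult.commute mult.left_commute)

lemma facts: "0 < a" "a < b" "4*b^2-a^2 > 0" "2*b-a > 0" "2*b^2-a^2 > 0" "a+b > 0" "b^2-a^2 > 0"
  "rr a b > 0" "2*b^2-a^2+a*rr a b > 0" "a^2 + a * rr a b > 0" "4*b-a > 0" "b > 0"
  using ab D_pos a2b2 rr_pos by (auto simp: power2_eq_square intro!: add_pos_pos mult_pos_pos)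

lemma T20: "T X20 a b = (2*a^2)/(4*b^2-a^2)"
  unfolding T_def X20_def ar1 ar2
  by (rule frac_eq[where c="- (a^2)"]; ((use facts in \<open>simp; fail\<close>) | algebra | (use facts in \<open>simp add: field_simps\<close>; algebra)))

lemma S20: "X20 b a b = X20 b b a"
  unfolding X20_def ar2 ar3 by (algebra | simp add: algebra_simps)

lemma T22: "T X22 a b = (2*a^2*b^2)/(2*b^4+2*a^2*b^2-a^4)"
  unfolding T_def X22_def ar1 ar2
  by (rule frac_eq[where c="a^2"]; ((use facts in \<open>simp; fail\<close>) | algebra | (use facts in \<open>simp add: field_simps\<close>; algebra)))

lemma S22: "X22 b a b = X22 b b a"
  unfolding X22_def ar2 ar3 by (algebra | simp add: algebra_simps)

lemma T8: "T X8 a b = (2*a)/(2*b+a)"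
  unfolding T_def X8_def ar1 ar2
  by (rule frac_eq[where c="1"]; ((use facts in \<open>simp; fail\<close>) | algebra | (use facts in \<open>simp add: field_simps\<close>; algebra)))

lemma S8: "X8 b a b = X8 b b a"
  unfolding X8_def ar2 ar3 by (algebra | simp add: algebra_simps)

lemma T3: "T X3 a b = (2*b^2)/(4*b^2-a^2)"
  unfolding T_def X3_def ar1 ar2
  by (rule frac_eq[where c="a^2"]; ((use facts in \<open>simp; fail\<close>) | algebra | (use facts in \<open>simp add: field_simps\<close>; algebra)))

lemma S3: "X3 b a b = X3 b b a"
  unfolding X3_def ar2 ar3 by (algebra | simp add: algebra_simps)

lemma T9: "T X9 a b = (2*b)/(4*b-a)"
  unfolding T_def X9_def ar1 ar2
  by (rule frac_eq[where c="a"]; ((use facts in \<open>simp; fail\<close>) | algebra | (use facts in \<open>simp add: field_simps\<close>; algebra)))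

lemma S9: "X9 b a b = X9 b b a"
  unfolding X9_def ar2 ar3 by (algebra | simp add: algebra_simps)

lemma T10: "T X10 a b = (a+b)/(a+2*b)"
  unfolding T_def X10_def ar1 ar2
  by (rule frac_eq[where c="2"]; ((use facts in \<open>simp; fail\<close>) | algebra | (use facts in \<open>simp add: field_simps\<close>; algebra)))

lemma S10: "X10 b a b = X10 b b a"
  unfolding X10_def ar2 ar3 by (algebra | simp add: algebra_simps)

lemma T21: "T X21 a b = (4*b^2)/(6*b^2+a*b-a^2)"
  unfolding T_def X21_def ar1 ar2
  by (rule frac_eq[where c="a*(a+b)"]; ((use facts in \<open>simp; fail\<close>) | algebra | (use facts in \<open>simp add: field_simps\<close>; algebra)))

lemma S21: "X21 b a b = X21 b b a"
  unfolding X21_def ar2 ar3 by (algebra | simp add: algebra_simps)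

lemma T2: "T X2 a b = (2)/(3)"
  unfolding T_def X2_def ar1 ar2
  by (rule frac_eq[where c="1"]; ((use facts in \<open>simp; fail\<close>) | algebra | (use facts in \<open>simp add: field_simps\<close>; algebra)))

lemma S2: "X2 b a b = X2 b b a"
  unfolding X2_def ar2 ar3 by (algebra | simp add: algebra_simps)

lemma T5: "T X5 a b = (3*b^2-a^2)/(4*b^2-a^2)"
  unfolding T_def X5_def ar1 ar2
  by (rule frac_eq[where c="2*a^2"]; ((use facts in \<open>simp; fail\<close>) | algebra | (use facts in \<open>simp add: field_simps\<close>; algebra)))

lemma S5: "X5 b a b = X5 b b a"
  unfolding X5_def ar2 ar3 by (algebra | simp add: algebra_simps)

lemma T12: "T X12 a b = ((a+b)^2*(2*b-a))/(2*a*b^2+(a+b)^2*(2*b-a))"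
  unfolding T_def X12_def ar1 ar2
  by (rule frac_eq[where c="2/(a*(2*b-a))"]; ((use facts in \<open>simp; fail\<close>) | algebra | (use facts in \<open>simp add: field_simps\<close>; algebra)))

lemma S12: "X12 b a b = X12 b b a"
  unfolding X12_def ar2 ar3 by (algebra | simp add: algebra_simps)

lemma T17: "T X17 a b = (2*(2*b^2-a^2+a*rr a b))/(4*b^2-a^2+3*a*rr a b)"
proof -
  have e1: "b^2 + a^2 - b^2 = a^2" "b^2 + b^2 - a^2 = 2*b^2 - a^2" "b + a = a + b" "b + b = 2*b" by simp_all
  have n1: "2*b^2-a^2+a*rr a b \<noteq> 0" "a^2 + a*rr a b \<noteq> 0"
    using facts by (smt (verit) mult_pos_pos zero_less_power)+
  show ?thesis unfolding T_def X17_def ar1 ar2 e1 frac2[OF n1]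
    by (rule frac_eq[where c=1]; algebra?; simp)
qed

lemma S17: "X17 b a b = X17 b b a"
  unfolding X17_def ar2 ar3 by (algebra | simp add: algebra_simps)

lemma T1: "T X1 a b = (2*b)/(a+2*b)"
  unfolding T_def X1_def ar1 ar2
  by (rule frac_eq[where c="1"]; ((use facts in \<open>simp; fail\<close>) | algebra | (use facts in \<open>simp add: field_simps\<close>; algebra)))

lemma S1: "X1 b a b = X1 b b a"
  unfolding X1_def ar2 ar3 by (algebra | simp add: algebra_simps)

lemma T13: "T X13 a b = (2*(5*a*b^2-2*a^3+b^2*rr a b))/(3*a*(4*b^2-a^2)+(a^2+2*b^2)*rr a b)"
  unfolding T_def X13_def ar1 ar2
  by (rule frac_eq[where c="a"]; ((use facts in \<open>simp; fail\<close>) | algebra | (use facts in \<open>simp add: field_simps\<close>; algebra)))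

lemma S13: "X13 b a b = X13 b b a"
  unfolding X13_def ar2 ar3 by (algebra | simp add: algebra_simps)

lemma T7: "T X7 a b = (2*(2*b-a))/(4*b-a)"
  unfolding T_def X7_def ar1 ar2
  by (rule frac_eq[where c="1/(a*(2*b-a))"]; ((use facts in \<open>simp; fail\<close>) | algebra | (use facts in \<open>simp add: field_simps\<close>; algebra)))

lemma S7: "X7 b a b = X7 b b a"
  unfolding X7_def ar2 ar3 by (algebra | simp add: algebra_simps)

lemma T6: "T X6 a b = (2*b^2)/(a^2+2*b^2)"
  unfolding T_def X6_def ar1 ar2
  by (rule frac_eq[where c="1"]; ((use facts in \<open>simp; fail\<close>) | algebra | (use facts in \<open>simp add: field_simps\<close>; algebra)))

lemma S6: "X6 b a b = X6 b b a"
  unfolding X6_def ar2 ar3 by (algebra | simp add: algebra_simps)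

lemma T4: "T X4 a b = (2*(2*b^2-a^2))/(4*b^2-a^2)"
  unfolding T_def X4_def ar1 ar2
  by (rule frac_eq[where c="a^2"]; ((use facts in \<open>simp; fail\<close>) | algebra | (use facts in \<open>simp add: field_simps\<close>; algebra)))

lemma S4: "X4 b a b = X4 b b a"
  unfolding X4_def ar2 ar3 by (algebra | simp add: algebra_simps)

lemma T27: "T X27 a b = (4*b*(2*b^2-a^2))/(a^2*(a+b)+4*b*(2*b^2-a^2))"
proof -
  have e1: "b^2 + a^2 - b^2 = a^2" "b^2 + b^2 - a^2 = 2*b^2 - a^2" "b + a = a + b" "b + b = 2*b" by simp_all
  have n1: "2*b*(2*b^2-a^2) \<noteq> 0" "(a+b)*a^2 \<noteq> 0"
    using facts by (smt (verit) mult_pos_pos zero_less_power)+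
  show ?thesis unfolding T_def X27_def ar1 ar2 e1 frac2[OF n1]
    by (rule frac_eq[where c=1]; algebra?; simp)
qed

lemma S27: "X27 b a b = X27 b b a"
  unfolding X27_def ar2 ar3 by (algebra | simp add: algebra_simps)

lemma T19: "T X19 a b = (2*b*(2*b^2-a^2))/(a^3+2*b*(2*b^2-a^2))"
  unfolding T_def X19_def ar1 ar2
  by (rule frac_eq[where c="1/(a^2*(2*b^2-a^2))"]; ((use facts in \<open>simp; fail\<close>) | algebra | (use facts in \<open>simp add: field_simps\<close>; algebra)))

lemma S19: "X19 b a b = X19 b b a"
  unfolding X19_def ar2 ar3 by (algebra | simp add: algebra_simps)

lemma T28: "T X28 a b = (4*b^2*(2*b^2-a^2))/(a^3*(a+b)+4*b^2*(2*b^2-a^2))"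
proof -
  have e1: "b^2 + a^2 - b^2 = a^2" "b^2 + b^2 - a^2 = 2*b^2 - a^2" "b + a = a + b" "b + b = 2*b" by simp_all
  have n1: "2*b*(2*b^2-a^2) \<noteq> 0" "(a+b)*a^2 \<noteq> 0"
    using facts by (smt (verit) mult_pos_pos zero_less_power)+
  show ?thesis unfolding T_def X28_def ar1 ar2 e1 frac2[OF n1]
    by (rule frac_eq[where c=1]; algebra?; simp)
qed

lemma S28: "X28 b a b = X28 b b a"
  unfolding X28_def ar2 ar3 by (algebra | simp add: algebra_simps)

lemma T25: "T X25 a b = (2*b^2*(2*b^2-a^2))/(a^4+2*b^2*(2*b^2-a^2))"
  unfolding T_def X25_def ar1 ar2
  by (rule frac_eq[where c="1/(a^2*(2*b^2-a^2))"]; ((use facts in \<open>simp; fail\<close>) | algebra | (use facts in \<open>simp add: field_simps\<close>; algebra)))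

lemma S25: "X25 b a b = X25 b b a"
  unfolding X25_def ar2 ar3 by (algebra | simp add: algebra_simps)

lemma T11: "T X11 a b = (1)/(1)"
  unfolding T_def X11_def ar1 ar2
  by (rule frac_eq[where c="2*a*(b-a)^2"]; ((use facts in \<open>simp; fail\<close>) | algebra | (use facts in \<open>simp add: field_simps\<close>; algebra)))

lemma S11: "X11 b a b = X11 b b a"
  unfolding X11_def ar2 ar3 by (algebra | simp add: algebra_simps)

lemma T14: "T X14 a b = (2*(b^2*rr a b-5*a*b^2+2*a^3))/(((a^2+2*b^2)*rr a b - 3*a*(4*b^2-a^2)))"
  unfolding T_def X14_def ar1 ar2
  by (rule frac_eq[where c="-a"]; ((use facts in \<open>simp; fail\<close>) | algebra | (use facts in \<open>simp add: field_simps\<close>; algebra)))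

lemma S14: "X14 b a b = X14 b b a"
  unfolding X14_def ar2 ar3 by (algebra | simp add: algebra_simps)

lemma T23: "T X23 a b = (2*b^2)/(b^2-a^2)"
  unfolding T_def X23_def ar1 ar2
  by (rule frac_eq[where c="a^2*(b^2-a^2)"]; ((use facts in \<open>simp; fail\<close>) | algebra | (use facts in \<open>simp add: field_simps\<close>; algebra)))

lemma S23: "X23 b a b = X23 b b a"
  unfolding X23_def ar2 ar3 by (algebra | simp add: algebra_simps)

lemma S16: "X16 b a b = X16 b b a"
  unfolding X16_def area2 area3 by (simp add: algebra_simps)

lemma T16: "T X16 a b = 2*b^2*(rr a b - 3*a)/((a^2+2*b^2)*rr a b - 3*a*(4*b^2-a^2))"
  unfolding T_def X16_def
proof (rule frac_eqk[where c="a * sqrt 3" and k=3])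
  have q: "sqrt 3 * (sqrt 3 * x) = 3 * x" for x by (simp add: mult.assoc[symmetric])
  have r: "rr a b = sqrt 3 * sqrt (4*b^2 - a^2)" by (simp add: rr_def)
  have t1: "tri_area a b b = a * sqrt (4*b^2 - a^2) / 4" using area1 by simp
  have t2: "tri_area b b a = a * sqrt (4*b^2 - a^2) / 4" using area2 by simp
  show "a * sqrt 3 \<noteq> 0" "(3::real) \<noteq> 0" using ab by simp_all
  show "3 * (2 * (b\<^sup>2 * (sqrt 3 * (b\<^sup>2 - b\<^sup>2 - a\<^sup>2) + 4 * tri_area b b a))) =
    a * sqrt 3 * (2 * b\<^sup>2 * (rr a b - 3 * a))" unfolding r t1 t2
    by (simp add: algebra_simps q power2_eq_square)
  show "3 * (a\<^sup>2 * (sqrt 3 * (a\<^sup>2 - b\<^sup>2 - b\<^sup>2) + 4 * tri_area a b b) +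
    2 * (b\<^sup>2 * (sqrt 3 * (b\<^sup>2 - b\<^sup>2 - a\<^sup>2) + 4 * tri_area b b a))) =
    a * sqrt 3 * ((a\<^sup>2 + 2 * b\<^sup>2) * rr a b - 3 * a * (4 * b\<^sup>2 - a\<^sup>2))" unfolding r t1 t2
    by (simp add: algebra_simps q power2_eq_square)
qed

lemma C20_22: "(2*a^2)/(4*b^2-a^2) < (2*a^2*b^2)/(2*b^4+2*a^2*b^2-a^4)"
proof -
  define e where "e = b - a"
  have ae: "0 < a" "0 < e" using ab by (auto simp: e_def)
  have q1: "0 < 4*b^2-a^2"
  proof -
    have "4*b^2-a^2 = 4*e^2 + 8*a*e + 3*a^2" unfolding e_def by algebra
    also have "0 < \<dots>" by ((intro add_pos_pos mult_pos_pos zero_less_power)?; simp add: ae)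
    finally show ?thesis by simp
  qed
  have q2: "0 < 2*b^4+2*a^2*b^2-a^4"
  proof -
    have "2*b^4+2*a^2*b^2-a^4 = 2*e^4 + 8*a*e^3 + 14*a^2*e^2 + 12*a^3*e + 3*a^4" unfolding e_def by algebra
    also have "0 < \<dots>" by ((intro add_pos_pos mult_pos_pos zero_less_power)?; simp add: ae)
    finally show ?thesis by simp
  qed
  have n: "0 < (2*a^2*b^2)*(4*b^2-a^2) - (2*a^2)*(2*b^4+2*a^2*b^2-a^4)"
  proof -
    have "(2*a^2*b^2)*(4*b^2-a^2) - (2*a^2)*(2*b^4+2*a^2*b^2-a^4) = 4*a^2*e^4 + 16*a^3*e^3 + 18*a^4*e^2 + 4*a^5*e" unfolding e_def by algebra
    also have "0 < \<dots>" by ((intro add_pos_pos mult_pos_pos zero_less_power)?; simp add: ae)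
    finally show ?thesis by simp
  qed
  show ?thesis by (rule fl[OF q1 q2 n])
qed

lemma C22_8: "(2*a^2*b^2)/(2*b^4+2*a^2*b^2-a^4) < (2*a)/(2*b+a)"
proof -
  define e where "e = b - a"
  have ae: "0 < a" "0 < e" using ab by (auto simp: e_def)
  have q1: "0 < 2*b^4+2*a^2*b^2-a^4"
  proof -
    have "2*b^4+2*a^2*b^2-a^4 = 2*e^4 + 8*a*e^3 + 14*a^2*e^2 + 12*a^3*e + 3*a^4" unfolding e_def by algebra
    also have "0 < \<dots>" by ((intro add_pos_pos mult_pos_pos zero_less_power)?; simp add: ae)
    finally show ?thesis by simp
  qed
  have q2: "0 < 2*b+a"
  proof -
    have "2*b+a = 2*e + 3*a" unfolding e_def by algebra
    also have "0 < \<dots>" by ((intro add_pos_pos mult_pos_pos zero_less_power)?; simp add: ae)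
    finally show ?thesis by simp
  qed
  have n: "0 < (2*a)*(2*b^4+2*a^2*b^2-a^4) - (2*a^2*b^2)*(2*b+a)"
  proof -
    have "(2*a)*(2*b^4+2*a^2*b^2-a^4) - (2*a^2*b^2)*(2*b+a) = 4*a*e^4 + 12*a^2*e^3 + 14*a^3*e^2 + 8*a^4*e" unfolding e_def by algebra
    also have "0 < \<dots>" by ((intro add_pos_pos mult_pos_pos zero_less_power)?; simp add: ae)
    finally show ?thesis by simp
  qed
  show ?thesis by (rule fl[OF q1 q2 n])
qed

lemma C8_3: "(2*a)/(2*b+a) < (2*b^2)/(4*b^2-a^2)"
proof -
  define e where "e = b - a"
  have ae: "0 < a" "0 < e" using ab by (auto simp: e_def)
  have q1: "0 < 2*b+a"
  proof -
    have "2*b+a = 2*e + 3*a" unfolding e_def by algebra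
    also have "0 < \<dots>" by ((intro add_pos_pos mult_pos_pos zero_less_power)?; simp add: ae)
    finally show ?thesis by simp
  qed
  have q2: "0 < 4*b^2-a^2"
  proof -
    have "4*b^2-a^2 = 4*e^2 + 8*a*e + 3*a^2" unfolding e_def by algebra
    also have "0 < \<dots>" by ((intro add_pos_pos mult_pos_pos zero_less_power)?; simp add: ae)
    finally show ?thesis by simp
  qed
  have n: "0 < (2*b^2)*(2*b+a) - (2*a)*(4*b^2-a^2)"
  proof -
    have "(2*b^2)*(2*b+a) - (2*a)*(4*b^2-a^2) = 4*e^3 + 6*a*e^2" unfolding e_def by algebra
    also have "0 < \<dots>" by ((intro add_pos_pos mult_pos_pos zero_less_power)?; simp add: ae)
    finally show ?thesis by simp
  qed
  show ?thesis by (rule fl[OF q1 q2 n])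
qed

lemma C3_9: "(2*b^2)/(4*b^2-a^2) < (2*b)/(4*b-a)"
proof -
  define e where "e = b - a"
  have ae: "0 < a" "0 < e" using ab by (auto simp: e_def)
  have q1: "0 < 4*b^2-a^2"
  proof -
    have "4*b^2-a^2 = 4*e^2 + 8*a*e + 3*a^2" unfolding e_def by algebra
    also have "0 < \<dots>" by ((intro add_pos_pos mult_pos_pos zero_less_power)?; simp add: ae)
    finally show ?thesis by simp
  qed
  have q2: "0 < 4*b-a"
  proof -
    have "4*b-a = 4*e + 3*a" unfolding e_def by algebra
    also have "0 < \<dots>" by ((intro add_pos_pos mult_pos_pos zero_less_power)?; simp add: ae)
    finally show ?thesis by simp
  qed
  have n: "0 < (2*b)*(4*b^2-a^2) - (2*b^2)*(4*b-a)"
  proof -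
    have "(2*b)*(4*b^2-a^2) - (2*b^2)*(4*b-a) = 2*a*e^2 + 2*a^2*e" unfolding e_def by algebra
    also have "0 < \<dots>" by ((intro add_pos_pos mult_pos_pos zero_less_power)?; simp add: ae)
    finally show ?thesis by simp
  qed
  show ?thesis by (rule fl[OF q1 q2 n])
qed

lemma C9_10: "(2*b)/(4*b-a) < (a+b)/(a+2*b)"
proof -
  define e where "e = b - a"
  have ae: "0 < a" "0 < e" using ab by (auto simp: e_def)
  have q1: "0 < 4*b-a"
  proof -
    have "4*b-a = 4*e + 3*a" unfolding e_def by algebra
    also have "0 < \<dots>" by ((intro add_pos_pos mult_pos_pos zero_less_power)?; simp add: ae)
    finally show ?thesis by simp
  qed
  have q2: "0 < a+2*b"
  proof -
    have "a+2*b = 2*e + 3*a" unfolding e_def by algebra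
    also have "0 < \<dots>" by ((intro add_pos_pos mult_pos_pos zero_less_power)?; simp add: ae)
    finally show ?thesis by simp
  qed
  have n: "0 < (a+b)*(4*b-a) - (2*b)*(a+2*b)"
  proof -
    have "(a+b)*(4*b-a) - (2*b)*(a+2*b) = a*e" unfolding e_def by algebra
    also have "0 < \<dots>" by ((intro add_pos_pos mult_pos_pos zero_less_power)?; simp add: ae)
    finally show ?thesis by simp
  qed
  show ?thesis by (rule fl[OF q1 q2 n])
qed

lemma C10_21: "(a+b)/(a+2*b) < (4*b^2)/(6*b^2+a*b-a^2)"
proof -
  define e where "e = b - a"
  have ae: "0 < a" "0 < e" using ab by (auto simp: e_def)
  have q1: "0 < a+2*b"
  proof -
    have "a+2*b = 2*e + 3*a" unfolding e_def by algebra
    also have "0 < \<dots>" by ((intro add_pos_pos mult_pos_pos zero_less_power)?; simp add: ae)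
    finally show ?thesis by simp
  qed
  have q2: "0 < 6*b^2+a*b-a^2"
  proof -
    have "6*b^2+a*b-a^2 = 6*e^2 + 13*a*e + 6*a^2" unfolding e_def by algebra
    also have "0 < \<dots>" by ((intro add_pos_pos mult_pos_pos zero_less_power)?; simp add: ae)
    finally show ?thesis by simp
  qed
  have n: "0 < (4*b^2)*(a+2*b) - (a+b)*(6*b^2+a*b-a^2)"
  proof -
    have "(4*b^2)*(a+2*b) - (a+b)*(6*b^2+a*b-a^2) = 2*e^3 + 3*a*e^2" unfolding e_def by algebra
    also have "0 < \<dots>" by ((intro add_pos_pos mult_pos_pos zero_less_power)?; simp add: ae)
    finally show ?thesis by simp
  qed
  show ?thesis by (rule fl[OF q1 q2 n])
qed

lemma C21_2: "(4*b^2)/(6*b^2+a*b-a^2) < (2)/(3)"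
proof -
  define e where "e = b - a"
  have ae: "0 < a" "0 < e" using ab by (auto simp: e_def)
  have q1: "0 < 6*b^2+a*b-a^2"
  proof -
    have "6*b^2+a*b-a^2 = 6*e^2 + 13*a*e + 6*a^2" unfolding e_def by algebra
    also have "0 < \<dots>" by ((intro add_pos_pos mult_pos_pos zero_less_power)?; simp add: ae)
    finally show ?thesis by simp
  qed
  have q2: "(0::real) < 3" by ((intro add_pos_pos mult_pos_pos zero_less_power)?; simp add: ae)
  have n: "0 < (2)*(6*b^2+a*b-a^2) - (4*b^2)*(3)"
  proof -
    have "(2)*(6*b^2+a*b-a^2) - (4*b^2)*(3) = 2*a*e" unfolding e_def by algebra
    also have "0 < \<dots>" by ((intro add_pos_pos mult_pos_pos zero_less_power)?; simp add: ae)
    finally show ?thesis by simp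
  qed
  show ?thesis by (rule fl[OF q1 q2 n])
qed

lemma C2_5: "(2)/(3) < (3*b^2-a^2)/(4*b^2-a^2)"
proof -
  define e where "e = b - a"
  have ae: "0 < a" "0 < e" using ab by (auto simp: e_def)
  have q1: "(0::real) < 3" by ((intro add_pos_pos mult_pos_pos zero_less_power)?; simp add: ae)
  have q2: "0 < 4*b^2-a^2"
  proof -
    have "4*b^2-a^2 = 4*e^2 + 8*a*e + 3*a^2" unfolding e_def by algebra
    also have "0 < \<dots>" by ((intro add_pos_pos mult_pos_pos zero_less_power)?; simp add: ae)
    finally show ?thesis by simp
  qed
  have n: "0 < (3*b^2-a^2)*(3) - (2)*(4*b^2-a^2)"
  proof -
    have "(3*b^2-a^2)*(3) - (2)*(4*b^2-a^2) = e^2 + 2*a*e" unfolding e_def by algebra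
    also have "0 < \<dots>" by ((intro add_pos_pos mult_pos_pos zero_less_power)?; simp add: ae)
    finally show ?thesis by simp
  qed
  show ?thesis by (rule fl[OF q1 q2 n])
qed

lemma C5_12: "(3*b^2-a^2)/(4*b^2-a^2) < ((a+b)^2*(2*b-a))/(2*a*b^2+(a+b)^2*(2*b-a))"
proof -
  define e where "e = b - a"
  have ae: "0 < a" "0 < e" using ab by (auto simp: e_def)
  have q1: "0 < 4*b^2-a^2"
  proof -
    have "4*b^2-a^2 = 4*e^2 + 8*a*e + 3*a^2" unfolding e_def by algebra
    also have "0 < \<dots>" by ((intro add_pos_pos mult_pos_pos zero_less_power)?; simp add: ae)
    finally show ?thesis by simp
  qed
  have q2: "0 < 2*a*b^2+(a+b)^2*(2*b-a)"
  proof -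
    have "2*a*b^2+(a+b)^2*(2*b-a) = 2*e^3 + 11*a*e^2 + 16*a^2*e + 6*a^3" unfolding e_def by algebra
    also have "0 < \<dots>" by ((intro add_pos_pos mult_pos_pos zero_less_power)?; simp add: ae)
    finally show ?thesis by simp
  qed
  have n: "0 < ((a+b)^2*(2*b-a))*(4*b^2-a^2) - (3*b^2-a^2)*(2*a*b^2+(a+b)^2*(2*b-a))"
  proof -
    have "((a+b)^2*(2*b-a))*(4*b^2-a^2) - (3*b^2-a^2)*(2*a*b^2+(a+b)^2*(2*b-a)) = 2*e^5 + 7*a*e^4 + 8*a^2*e^3 + 3*a^3*e^2" unfolding e_def by algebra
    also have "0 < \<dots>" by ((intro add_pos_pos mult_pos_pos zero_less_power)?; simp add: ae)
    finally show ?thesis by simp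
  qed
  show ?thesis by (rule fl[OF q1 q2 n])
qed

lemma C7_6: "(2*(2*b-a))/(4*b-a) < (2*b^2)/(a^2+2*b^2)"
proof -
  define e where "e = b - a"
  have ae: "0 < a" "0 < e" using ab by (auto simp: e_def)
  have q1: "0 < 4*b-a"
  proof -
    have "4*b-a = 4*e + 3*a" unfolding e_def by algebra
    also have "0 < \<dots>" by ((intro add_pos_pos mult_pos_pos zero_less_power)?; simp add: ae)
    finally show ?thesis by simp
  qed
  have q2: "0 < a^2+2*b^2"
  proof -
    have "a^2+2*b^2 = 2*e^2 + 4*a*e + 3*a^2" unfolding e_def by algebra
    also have "0 < \<dots>" by ((intro add_pos_pos mult_pos_pos zero_less_power)?; simp add: ae)
    finally show ?thesis by simp
  qed
  have n: "0 < (2*b^2)*(4*b-a) - (2*(2*b-a))*(a^2+2*b^2)"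
  proof -
    have "(2*b^2)*(4*b-a) - (2*(2*b-a))*(a^2+2*b^2) = 2*a*e^2" unfolding e_def by algebra
    also have "0 < \<dots>" by ((intro add_pos_pos mult_pos_pos zero_less_power)?; simp add: ae)
    finally show ?thesis by simp
  qed
  show ?thesis by (rule fl[OF q1 q2 n])
qed

lemma C6_4: "(2*b^2)/(a^2+2*b^2) < (2*(2*b^2-a^2))/(4*b^2-a^2)"
proof -
  define e where "e = b - a"
  have ae: "0 < a" "0 < e" using ab by (auto simp: e_def)
  have q1: "0 < a^2+2*b^2"
  proof -
    have "a^2+2*b^2 = 2*e^2 + 4*a*e + 3*a^2" unfolding e_def by algebra
    also have "0 < \<dots>" by ((intro add_pos_pos mult_pos_pos zero_less_power)?; simp add: ae)
    finally show ?thesis by simp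
  qed
  have q2: "0 < 4*b^2-a^2"
  proof -
    have "4*b^2-a^2 = 4*e^2 + 8*a*e + 3*a^2" unfolding e_def by algebra
    also have "0 < \<dots>" by ((intro add_pos_pos mult_pos_pos zero_less_power)?; simp add: ae)
    finally show ?thesis by simp
  qed
  have n: "0 < (2*(2*b^2-a^2))*(a^2+2*b^2) - (2*b^2)*(4*b^2-a^2)"
  proof -
    have "(2*(2*b^2-a^2))*(a^2+2*b^2) - (2*b^2)*(4*b^2-a^2) = 2*a^2*e^2 + 4*a^3*e" unfolding e_def by algebra
    also have "0 < \<dots>" by ((intro add_pos_pos mult_pos_pos zero_less_power)?; simp add: ae)
    finally show ?thesis by simp
  qed
  show ?thesis by (rule fl[OF q1 q2 n])
qed

lemma C4_27: "(2*(2*b^2-a^2))/(4*b^2-a^2) < (4*b*(2*b^2-a^2))/(a^2*(a+b)+4*b*(2*b^2-a^2))"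
proof -
  define e where "e = b - a"
  have ae: "0 < a" "0 < e" using ab by (auto simp: e_def)
  have q1: "0 < 4*b^2-a^2"
  proof -
    have "4*b^2-a^2 = 4*e^2 + 8*a*e + 3*a^2" unfolding e_def by algebra
    also have "0 < \<dots>" by ((intro add_pos_pos mult_pos_pos zero_less_power)?; simp add: ae)
    finally show ?thesis by simp
  qed
  have q2: "0 < a^2*(a+b)+4*b*(2*b^2-a^2)"
  proof -
    have "a^2*(a+b)+4*b*(2*b^2-a^2) = 8*e^3 + 24*a*e^2 + 21*a^2*e + 6*a^3" unfolding e_def by algebra
    also have "0 < \<dots>" by ((intro add_pos_pos mult_pos_pos zero_less_power)?; simp add: ae)
    finally show ?thesis by simp
  qed
  have n: "0 < (4*b*(2*b^2-a^2))*(4*b^2-a^2) - (2*(2*b^2-a^2))*(a^2*(a+b)+4*b*(2*b^2-a^2))"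
  proof -
    have "(4*b*(2*b^2-a^2))*(4*b^2-a^2) - (2*(2*b^2-a^2))*(a^2*(a+b)+4*b*(2*b^2-a^2)) = 4*a^2*e^3 + 8*a^3*e^2 + 2*a^4*e" unfolding e_def by algebra
    also have "0 < \<dots>" by ((intro add_pos_pos mult_pos_pos zero_less_power)?; simp add: ae)
    finally show ?thesis by simp
  qed
  show ?thesis by (rule fl[OF q1 q2 n])
qed

lemma C27_19: "(4*b*(2*b^2-a^2))/(a^2*(a+b)+4*b*(2*b^2-a^2)) < (2*b*(2*b^2-a^2))/(a^3+2*b*(2*b^2-a^2))"
proof -
  define e where "e = b - a"
  have ae: "0 < a" "0 < e" using ab by (auto simp: e_def)
  have q1: "0 < a^2*(a+b)+4*b*(2*b^2-a^2)"
  proof -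
    have "a^2*(a+b)+4*b*(2*b^2-a^2) = 8*e^3 + 24*a*e^2 + 21*a^2*e + 6*a^3" unfolding e_def by algebra
    also have "0 < \<dots>" by ((intro add_pos_pos mult_pos_pos zero_less_power)?; simp add: ae)
    finally show ?thesis by simp
  qed
  have q2: "0 < a^3+2*b*(2*b^2-a^2)"
  proof -
    have "a^3+2*b*(2*b^2-a^2) = 4*e^3 + 12*a*e^2 + 10*a^2*e + 3*a^3" unfolding e_def by algebra
    also have "0 < \<dots>" by ((intro add_pos_pos mult_pos_pos zero_less_power)?; simp add: ae)
    finally show ?thesis by simp
  qed
  have n: "0 < (2*b*(2*b^2-a^2))*(a^2*(a+b)+4*b*(2*b^2-a^2)) - (4*b*(2*b^2-a^2))*(a^3+2*b*(2*b^2-a^2))"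
  proof -
    have "(2*b*(2*b^2-a^2))*(a^2*(a+b)+4*b*(2*b^2-a^2)) - (4*b*(2*b^2-a^2))*(a^3+2*b*(2*b^2-a^2)) = 4*a^2*e^4 + 12*a^3*e^3 + 10*a^4*e^2 + 2*a^5*e" unfolding e_def by algebra
    also have "0 < \<dots>" by ((intro add_pos_pos mult_pos_pos zero_less_power)?; simp add: ae)
    finally show ?thesis by simp
  qed
  show ?thesis by (rule fl[OF q1 q2 n])
qed

lemma C19_28: "(2*b*(2*b^2-a^2))/(a^3+2*b*(2*b^2-a^2)) < (4*b^2*(2*b^2-a^2))/(a^3*(a+b)+4*b^2*(2*b^2-a^2))"
proof -
  define e where "e = b - a"
  have ae: "0 < a" "0 < e" using ab by (auto simp: e_def)
  have q1: "0 < a^3+2*b*(2*b^2-a^2)"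
  proof -
    have "a^3+2*b*(2*b^2-a^2) = 4*e^3 + 12*a*e^2 + 10*a^2*e + 3*a^3" unfolding e_def by algebra
    also have "0 < \<dots>" by ((intro add_pos_pos mult_pos_pos zero_less_power)?; simp add: ae)
    finally show ?thesis by simp
  qed
  have q2: "0 < a^3*(a+b)+4*b^2*(2*b^2-a^2)"
  proof -
    have "a^3*(a+b)+4*b^2*(2*b^2-a^2) = 8*e^4 + 32*a*e^3 + 44*a^2*e^2 + 25*a^3*e + 6*a^4" unfolding e_def by algebra
    also have "0 < \<dots>" by ((intro add_pos_pos mult_pos_pos zero_less_power)?; simp add: ae)
    finally show ?thesis by simp
  qed
  have n: "0 < (4*b^2*(2*b^2-a^2))*(a^3+2*b*(2*b^2-a^2)) - (2*b*(2*b^2-a^2))*(a^3*(a+b)+4*b^2*(2*b^2-a^2))"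
  proof -
    have "(4*b^2*(2*b^2-a^2))*(a^3+2*b*(2*b^2-a^2)) - (2*b*(2*b^2-a^2))*(a^3*(a+b)+4*b^2*(2*b^2-a^2)) = 4*a^3*e^4 + 12*a^4*e^3 + 10*a^5*e^2 + 2*a^6*e" unfolding e_def by algebra
    also have "0 < \<dots>" by ((intro add_pos_pos mult_pos_pos zero_less_power)?; simp add: ae)
    finally show ?thesis by simp
  qed
  show ?thesis by (rule fl[OF q1 q2 n])
qed

lemma C28_25: "(4*b^2*(2*b^2-a^2))/(a^3*(a+b)+4*b^2*(2*b^2-a^2)) < (2*b^2*(2*b^2-a^2))/(a^4+2*b^2*(2*b^2-a^2))"
proof -
  define e where "e = b - a"
  have ae: "0 < a" "0 < e" using ab by (auto simp: e_def)
  have q1: "0 < a^3*(a+b)+4*b^2*(2*b^2-a^2)"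
  proof -
    have "a^3*(a+b)+4*b^2*(2*b^2-a^2) = 8*e^4 + 32*a*e^3 + 44*a^2*e^2 + 25*a^3*e + 6*a^4" unfolding e_def by algebra
    also have "0 < \<dots>" by ((intro add_pos_pos mult_pos_pos zero_less_power)?; simp add: ae)
    finally show ?thesis by simp
  qed
  have q2: "0 < a^4+2*b^2*(2*b^2-a^2)"
  proof -
    have "a^4+2*b^2*(2*b^2-a^2) = 4*e^4 + 16*a*e^3 + 22*a^2*e^2 + 12*a^3*e + 3*a^4" unfolding e_def by algebra
    also have "0 < \<dots>" by ((intro add_pos_pos mult_pos_pos zero_less_power)?; simp add: ae)
    finally show ?thesis by simp
  qed
  have n: "0 < (2*b^2*(2*b^2-a^2))*(a^3*(a+b)+4*b^2*(2*b^2-a^2)) - (4*b^2*(2*b^2-a^2))*(a^4+2*b^2*(2*b^2-a^2))"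
  proof -
    have "(2*b^2*(2*b^2-a^2))*(a^3*(a+b)+4*b^2*(2*b^2-a^2)) - (4*b^2*(2*b^2-a^2))*(a^4+2*b^2*(2*b^2-a^2)) = 4*a^3*e^5 + 16*a^4*e^4 + 22*a^5*e^3 + 12*a^6*e^2 + 2*a^7*e" unfolding e_def by algebra
    also have "0 < \<dots>" by ((intro add_pos_pos mult_pos_pos zero_less_power)?; simp add: ae)
    finally show ?thesis by simp
  qed
  show ?thesis by (rule fl[OF q1 q2 n])
qed

lemma C25_11: "(2*b^2*(2*b^2-a^2))/(a^4+2*b^2*(2*b^2-a^2)) < (1)/(1)"
proof -
  define e where "e = b - a"
  have ae: "0 < a" "0 < e" using ab by (auto simp: e_def)
  have q1: "0 < a^4+2*b^2*(2*b^2-a^2)"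
  proof -
    have "a^4+2*b^2*(2*b^2-a^2) = 4*e^4 + 16*a*e^3 + 22*a^2*e^2 + 12*a^3*e + 3*a^4" unfolding e_def by algebra
    also have "0 < \<dots>" by ((intro add_pos_pos mult_pos_pos zero_less_power)?; simp add: ae)
    finally show ?thesis by simp
  qed
  have q2: "(0::real) < 1" by ((intro add_pos_pos mult_pos_pos zero_less_power)?; simp add: ae)
  have n: "0 < (1)*(a^4+2*b^2*(2*b^2-a^2)) - (2*b^2*(2*b^2-a^2))*(1)"
  proof -
    have "(1)*(a^4+2*b^2*(2*b^2-a^2)) - (2*b^2*(2*b^2-a^2))*(1) = a^4" unfolding e_def by algebra
    also have "0 < \<dots>" by ((intro add_pos_pos mult_pos_pos zero_less_power)?; simp add: ae)
    finally show ?thesis by simp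
  qed
  show ?thesis by (rule fl[OF q1 q2 n])
qed

lemma P20: "0 < (2*a^2)/(4*b^2-a^2)"
proof -
  define e where "e = b - a"
  have ae: "0 < a" "0 < e" using ab by (auto simp: e_def)
  have q1: "(0::real) < 2*a^2" by ((intro add_pos_pos mult_pos_pos zero_less_power)?; simp add: ae)
  have q2: "0 < 4*b^2-a^2"
  proof -
    have "4*b^2-a^2 = 4*e^2 + 8*a*e + 3*a^2" unfolding e_def by algebra
    also have "0 < \<dots>" by ((intro add_pos_pos mult_pos_pos zero_less_power)?; simp add: ae)
    finally show ?thesis by simp
  qed
  show ?thesis using q1 q2 by (rule divide_pos_pos)
qed

lemma Epos: "0 < (a^2+2*b^2)*rr a b - 3*a*(4*b^2-a^2)"
proof -
  define e where "e = b - a"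
  have ae: "0 < a" "0 < e" using ab by (auto simp: e_def)
  have h: "0 < (a^2+2*b^2)*rr a b - 3*a*(4*b^2-a^2)"
  proof -
    have X: "(a^2+2*b^2)*rr a b - 3*a*(4*b^2-a^2) = (-12*a*e^2 + -24*a^2*e + -9*a^3) + (2*e^2 + 4*a*e + 3*a^2) * rr a b + (0) * ((rr a b)^2 - 3*(4*b^2-a^2))" unfolding e_def by algebra
  have hB: "0 < 2*e^2 + 4*a*e + 3*a^2" by ((intro add_pos_pos mult_pos_pos zero_less_power)?; simp add: ae)
    have hS: "0 < (2*e^2 + 4*a*e + 3*a^2)^2 * (3*(4*b^2-a^2)) - (-12*a*e^2 + -24*a^2*e + -9*a^3)^2"
    proof -
      have "(2*e^2 + 4*a*e + 3*a^2)^2 * (3*(4*b^2-a^2)) - (-12*a*e^2 + -24*a^2*e + -9*a^3)^2 = 48*e^6 + 288*a*e^5 + 612*a^2*e^4 + 528*a^3*e^3 + 144*a^4*e^2" unfolding e_def by algebra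
      also have "0 < \<dots>" by ((intro add_pos_pos mult_pos_pos zero_less_power)?; simp add: ae)
      finally show ?thesis by simp
    qed
    have N: "0 < (-12*a*e^2 + -24*a^2*e + -9*a^3) + (2*e^2 + 4*a*e + 3*a^2) * rr a b" by (rule LB[OF hB rr_pos rr_sq hS])
    show ?thesis using N unfolding X rr_sq by simp
  qed
  show ?thesis by (rule h)
qed

lemma C12_17: "((a+b)^2*(2*b-a))/(2*a*b^2+(a+b)^2*(2*b-a)) < (2*(2*b^2-a^2+a*rr a b))/(4*b^2-a^2+3*a*rr a b)"
proof -
  define e where "e = b - a"
  have ae: "0 < a" "0 < e" using ab by (auto simp: e_def)
  have q1: "0 < 2*a*b^2+(a+b)^2*(2*b-a)"
  proof -
    have "2*a*b^2+(a+b)^2*(2*b-a) = 2*e^3 + 11*a*e^2 + 16*a^2*e + 6*a^3" unfolding e_def by algebra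
    also have "0 < \<dots>" by ((intro add_pos_pos mult_pos_pos zero_less_power)?; simp add: ae)
    finally show ?thesis by simp
  qed
  have q2: "0 < 4*b^2-a^2+3*a*rr a b" using ab D_pos rr_pos by (intro add_pos_pos mult_pos_pos; simp)
  have n: "0 < (2*(2*b^2-a^2+a*rr a b))*(2*a*b^2+(a+b)^2*(2*b-a)) - ((a+b)^2*(2*b-a))*(4*b^2-a^2+3*a*rr a b)"
  proof -
    have X: "(2*(2*b^2-a^2+a*rr a b))*(2*a*b^2+(a+b)^2*(2*b-a)) - ((a+b)^2*(2*b-a))*(4*b^2-a^2+3*a*rr a b) = (8*a*e^4 + 30*a^2*e^3 + 35*a^3*e^2 + 12*a^4*e) + (-2*a*e^3 + -5*a^2*e^2 + -4*a^3*e) * rr a b + (0) * ((rr a b)^2 - 3*(4*b^2-a^2))" unfolding e_def by algebra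
  have hA: "0 < 8*a*e^4 + 30*a^2*e^3 + 35*a^3*e^2 + 12*a^4*e" by ((intro add_pos_pos mult_pos_pos zero_less_power)?; simp add: ae)
    have hS: "0 < (8*a*e^4 + 30*a^2*e^3 + 35*a^3*e^2 + 12*a^4*e)^2 - (-2*a*e^3 + -5*a^2*e^2 + -4*a^3*e)^2 * (3*(4*b^2-a^2))"
    proof -
      have "(8*a*e^4 + 30*a^2*e^3 + 35*a^3*e^2 + 12*a^4*e)^2 - (-2*a*e^3 + -5*a^2*e^2 + -4*a^3*e)^2 * (3*(4*b^2-a^2)) = 16*a^2*e^8 + 144*a^3*e^7 + 452*a^4*e^6 + 648*a^5*e^5 + 424*a^6*e^4 + 96*a^7*e^3" unfolding e_def by algebra
      also have "0 < \<dots>" by ((intro add_pos_pos mult_pos_pos zero_less_power)?; simp add: ae)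
      finally show ?thesis by simp
    qed
    have N: "0 < (8*a*e^4 + 30*a^2*e^3 + 35*a^3*e^2 + 12*a^4*e) + (-2*a*e^3 + -5*a^2*e^2 + -4*a^3*e) * rr a b" by (rule LA[OF hA rr_sq hS])
    show ?thesis using N unfolding X rr_sq by simp
  qed
  show ?thesis by (rule fl[OF q1 q2 n])
qed

lemma C17_1: "(2*(2*b^2-a^2+a*rr a b))/(4*b^2-a^2+3*a*rr a b) < (2*b)/(a+2*b)"
proof -
  define e where "e = b - a"
  have ae: "0 < a" "0 < e" using ab by (auto simp: e_def)
  have q1: "0 < 4*b^2-a^2+3*a*rr a b" using ab D_pos rr_pos by (intro add_pos_pos mult_pos_pos; simp)
  have q2: "0 < a+2*b"
  proof -
    have "a+2*b = 2*e + 3*a" unfolding e_def by algebra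
    also have "0 < \<dots>" by ((intro add_pos_pos mult_pos_pos zero_less_power)?; simp add: ae)
    finally show ?thesis by simp
  qed
  have n: "0 < (2*b)*(4*b^2-a^2+3*a*rr a b) - (2*(2*b^2-a^2+a*rr a b))*(a+2*b)"
  proof -
    have X: "(2*b)*(4*b^2-a^2+3*a*rr a b) - (2*(2*b^2-a^2+a*rr a b))*(a+2*b) = (-4*a*e^2 + -6*a^2*e) + (2*a*e) * rr a b + (0) * ((rr a b)^2 - 3*(4*b^2-a^2))" unfolding e_def by algebra
  have hB: "0 < 2*a*e" by ((intro add_pos_pos mult_pos_pos zero_less_power)?; simp add: ae)
    have hS: "0 < (2*a*e)^2 * (3*(4*b^2-a^2)) - (-4*a*e^2 + -6*a^2*e)^2"
    proof -
      have "(2*a*e)^2 * (3*(4*b^2-a^2)) - (-4*a*e^2 + -6*a^2*e)^2 = 32*a^2*e^4 + 48*a^3*e^3" unfolding e_def by algebra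
      also have "0 < \<dots>" by ((intro add_pos_pos mult_pos_pos zero_less_power)?; simp add: ae)
      finally show ?thesis by simp
    qed
    have N: "0 < (-4*a*e^2 + -6*a^2*e) + (2*a*e) * rr a b" by (rule LB[OF hB rr_pos rr_sq hS])
    show ?thesis using N unfolding X rr_sq by simp
  qed
  show ?thesis by (rule fl[OF q1 q2 n])
qed

lemma C1_13: "(2*b)/(a+2*b) < (2*(5*a*b^2-2*a^3+b^2*rr a b))/(3*a*(4*b^2-a^2)+(a^2+2*b^2)*rr a b)"
proof -
  define e where "e = b - a"
  have ae: "0 < a" "0 < e" using ab by (auto simp: e_def)
  have q1: "0 < a+2*b"
  proof -
    have "a+2*b = 2*e + 3*a" unfolding e_def by algebra
    also have "0 < \<dots>" by ((intro add_pos_pos mult_pos_pos zero_less_power)?; simp add: ae)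
    finally show ?thesis by simp
  qed
  have q2: "0 < 3*a*(4*b^2-a^2)+(a^2+2*b^2)*rr a b" using ab D_pos rr_pos by (intro add_pos_pos mult_pos_pos; simp)
  have n: "0 < (2*(5*a*b^2-2*a^3+b^2*rr a b))*(a+2*b) - (2*b)*(3*a*(4*b^2-a^2)+(a^2+2*b^2)*rr a b)"
  proof -
    have X: "(2*(5*a*b^2-2*a^3+b^2*rr a b))*(a+2*b) - (2*b)*(3*a*(4*b^2-a^2)+(a^2+2*b^2)*rr a b) = (-4*a*e^3 + -2*a^2*e^2 + 6*a^3*e) + (2*a*e^2 + 2*a^2*e) * rr a b + (0) * ((rr a b)^2 - 3*(4*b^2-a^2))" unfolding e_def by algebra
  have hB: "0 < 2*a*e^2 + 2*a^2*e" by ((intro add_pos_pos mult_pos_pos zero_less_power)?; simp add: ae)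
    have hS: "0 < (2*a*e^2 + 2*a^2*e)^2 * (3*(4*b^2-a^2)) - (-4*a*e^3 + -2*a^2*e^2 + 6*a^3*e)^2"
    proof -
      have "(2*a*e^2 + 2*a^2*e)^2 * (3*(4*b^2-a^2)) - (-4*a*e^3 + -2*a^2*e^2 + 6*a^3*e)^2 = 32*a^2*e^6 + 176*a^3*e^5 + 320*a^4*e^4 + 192*a^5*e^3" unfolding e_def by algebra
      also have "0 < \<dots>" by ((intro add_pos_pos mult_pos_pos zero_less_power)?; simp add: ae)
      finally show ?thesis by simp
    qed
    have N: "0 < (-4*a*e^3 + -2*a^2*e^2 + 6*a^3*e) + (2*a*e^2 + 2*a^2*e) * rr a b" by (rule LB[OF hB rr_pos rr_sq hS])
    show ?thesis using N unfolding X rr_sq by simp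
  qed
  show ?thesis by (rule fl[OF q1 q2 n])
qed

lemma C13_7: "(2*(5*a*b^2-2*a^3+b^2*rr a b))/(3*a*(4*b^2-a^2)+(a^2+2*b^2)*rr a b) < (2*(2*b-a))/(4*b-a)"
proof -
  define e where "e = b - a"
  have ae: "0 < a" "0 < e" using ab by (auto simp: e_def)
  have q1: "0 < 3*a*(4*b^2-a^2)+(a^2+2*b^2)*rr a b" using ab D_pos rr_pos by (intro add_pos_pos mult_pos_pos; simp)
  have q2: "0 < 4*b-a"
  proof -
    have "4*b-a = 4*e + 3*a" unfolding e_def by algebra
    also have "0 < \<dots>" by ((intro add_pos_pos mult_pos_pos zero_less_power)?; simp add: ae)
    finally show ?thesis by simp
  qed
  have n: "0 < (2*(2*b-a))*(3*a*(4*b^2-a^2)+(a^2+2*b^2)*rr a b) - (2*(5*a*b^2-2*a^3+b^2*rr a b))*(4*b-a)"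
  proof -
    have X: "(2*(2*b-a))*(3*a*(4*b^2-a^2)+(a^2+2*b^2)*rr a b) - (2*(5*a*b^2-2*a^3+b^2*rr a b))*(4*b-a) = (8*a*e^3 + 10*a^2*e^2) + (-2*a*e^2) * rr a b + (0) * ((rr a b)^2 - 3*(4*b^2-a^2))" unfolding e_def by algebra
  have hA: "0 < 8*a*e^3 + 10*a^2*e^2" by ((intro add_pos_pos mult_pos_pos zero_less_power)?; simp add: ae)
    have hS: "0 < (8*a*e^3 + 10*a^2*e^2)^2 - (-2*a*e^2)^2 * (3*(4*b^2-a^2))"
    proof -
      have "(8*a*e^3 + 10*a^2*e^2)^2 - (-2*a*e^2)^2 * (3*(4*b^2-a^2)) = 16*a^2*e^6 + 64*a^3*e^5 + 64*a^4*e^4" unfolding e_def by algebra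
      also have "0 < \<dots>" by ((intro add_pos_pos mult_pos_pos zero_less_power)?; simp add: ae)
      finally show ?thesis by simp
    qed
    have N: "0 < (8*a*e^3 + 10*a^2*e^2) + (-2*a*e^2) * rr a b" by (rule LA[OF hA rr_sq hS])
    show ?thesis using N unfolding X rr_sq by simp
  qed
  show ?thesis by (rule fl[OF q1 q2 n])
qed

lemma C11_14: "(1)/(1) < (2*(b^2*rr a b-5*a*b^2+2*a^3))/((a^2+2*b^2)*rr a b - 3*a*(4*b^2-a^2))"
proof -
  define e where "e = b - a"
  have ae: "0 < a" "0 < e" using ab by (auto simp: e_def)
  have q1: "(0::real) < 1" by ((intro add_pos_pos mult_pos_pos zero_less_power)?; simp add: ae)
  have q2: "0 < (a^2+2*b^2)*rr a b - 3*a*(4*b^2-a^2)" by (rule Epos)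
  have n: "0 < (2*(b^2*rr a b-5*a*b^2+2*a^3))*(1) - (1)*((a^2+2*b^2)*rr a b - 3*a*(4*b^2-a^2))"
  proof -
    have X: "(2*(b^2*rr a b-5*a*b^2+2*a^3))*(1) - (1)*((a^2+2*b^2)*rr a b - 3*a*(4*b^2-a^2)) = (2*a*e^2 + 4*a^2*e + 3*a^3) + (-1*a^2) * rr a b + (0) * ((rr a b)^2 - 3*(4*b^2-a^2))" unfolding e_def by algebra
  have hA: "0 < 2*a*e^2 + 4*a^2*e + 3*a^3" by ((intro add_pos_pos mult_pos_pos zero_less_power)?; simp add: ae)
    have hS: "0 < (2*a*e^2 + 4*a^2*e + 3*a^3)^2 - (-1*a^2)^2 * (3*(4*b^2-a^2))"
    proof -
      have "(2*a*e^2 + 4*a^2*e + 3*a^3)^2 - (-1*a^2)^2 * (3*(4*b^2-a^2)) = 4*a^2*e^4 + 16*a^3*e^3 + 16*a^4*e^2" unfolding e_def by algebra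
      also have "0 < \<dots>" by ((intro add_pos_pos mult_pos_pos zero_less_power)?; simp add: ae)
      finally show ?thesis by simp
    qed
    have N: "0 < (2*a*e^2 + 4*a^2*e + 3*a^3) + (-1*a^2) * rr a b" by (rule LA[OF hA rr_sq hS])
    show ?thesis using N unfolding X rr_sq by simp
  qed
  show ?thesis by (rule fl[OF q1 q2 n])
qed

lemma C16_23: "(2*b^2*(rr a b - 3*a))/((a^2+2*b^2)*rr a b - 3*a*(4*b^2-a^2)) < (2*b^2)/(b^2-a^2)"
proof -
  define e where "e = b - a"
  have ae: "0 < a" "0 < e" using ab by (auto simp: e_def)
  have q1: "0 < (a^2+2*b^2)*rr a b - 3*a*(4*b^2-a^2)" by (rule Epos)
  have q2: "0 < b^2-a^2"
  proof -
    have "b^2-a^2 = e^2 + 2*a*e" unfolding e_def by algebra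
    also have "0 < \<dots>" by ((intro add_pos_pos mult_pos_pos zero_less_power)?; simp add: ae)
    finally show ?thesis by simp
  qed
  have n: "0 < (2*b^2)*((a^2+2*b^2)*rr a b - 3*a*(4*b^2-a^2)) - (2*b^2*(rr a b - 3*a))*(b^2-a^2)"
  proof -
    have X: "(2*b^2)*((a^2+2*b^2)*rr a b - 3*a*(4*b^2-a^2)) - (2*b^2*(rr a b - 3*a))*(b^2-a^2) = (-18*a*e^4 + -72*a^2*e^3 + -108*a^3*e^2 + -72*a^4*e + -18*a^5) + (2*e^4 + 8*a*e^3 + 16*a^2*e^2 + 16*a^3*e + 6*a^4) * rr a b + (0) * ((rr a b)^2 - 3*(4*b^2-a^2))" unfolding e_def by algebra
  have hB: "0 < 2*e^4 + 8*a*e^3 + 16*a^2*e^2 + 16*a^3*e + 6*a^4" by ((intro add_pos_pos mult_pos_pos zero_less_power)?; simp add: ae)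
    have hS: "0 < (2*e^4 + 8*a*e^3 + 16*a^2*e^2 + 16*a^3*e + 6*a^4)^2 * (3*(4*b^2-a^2)) - (-18*a*e^4 + -72*a^2*e^3 + -108*a^3*e^2 + -72*a^4*e + -18*a^5)^2"
    proof -
      have "(2*e^4 + 8*a*e^3 + 16*a^2*e^2 + 16*a^3*e + 6*a^4)^2 * (3*(4*b^2-a^2)) - (-18*a*e^4 + -72*a^2*e^3 + -108*a^3*e^2 + -72*a^4*e + -18*a^5)^2 = 48*e^10 + 480*a*e^9 + 2016*a^2*e^8 + 4608*a^3*e^7 + 6192*a^4*e^6 + 4896*a^5*e^5 + 2112*a^6*e^4 + 384*a^7*e^3" unfolding e_def by algebra
      also have "0 < \<dots>" by ((intro add_pos_pos mult_pos_pos zero_less_power)?; simp add: ae)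
      finally show ?thesis by simp
    qed
    have N: "0 < (-18*a*e^4 + -72*a^2*e^3 + -108*a^3*e^2 + -72*a^4*e + -18*a^5) + (2*e^4 + 8*a*e^3 + 16*a^2*e^2 + 16*a^3*e + 6*a^4) * rr a b" by (rule LB[OF hB rr_pos rr_sq hS])
    show ?thesis using N unfolding X rr_sq by simp
  qed
  show ?thesis by (rule fl[OF q1 q2 n])
qed

lemma C14_16: "(2*(b^2*rr a b-5*a*b^2+2*a^3))/((a^2+2*b^2)*rr a b - 3*a*(4*b^2-a^2)) < (2*b^2*(rr a b - 3*a))/((a^2+2*b^2)*rr a b - 3*a*(4*b^2-a^2))"
proof -
  define e where "e = b - a"
  have ae: "0 < a" "0 < e" using ab by (auto simp: e_def)
  have "2*b^2*(rr a b - 3*a) - 2*(b^2*rr a b-5*a*b^2+2*a^3) = 4*a*(b^2-a^2)" by algebra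
  moreover have "0 < 4*a*(b^2-a^2)" using ab a2b2 by simp
  ultimately have "2*(b^2*rr a b-5*a*b^2+2*a^3) < 2*b^2*(rr a b - 3*a)" by linarith
  then show ?thesis using Epos by (rule divide_strict_right_mono)
qed

end

lemma center_iso:
  fixes A B C :: complex
  assumes "dist A B = b" "dist C A = b" "dist B C = a" "f b a b = f b b a"
    "f a b b + 2 * f b b a \<noteq> 0"
  shows "dist A (center f A B C) = \<bar>T f a b\<bar> * dist A ((B + C) / 2)"
proof -
  define u where "u = f a b b"
  define v where "v = f b b a"
  define U where "U = (of_real u :: complex)"
  define V where "V = (of_real v :: complex)"
  have c: "center f A B C = (U * A + V * B + V * C) / (U + V + V)"
    unfolding center_def Let_def using assms by (simp add: u_def v_def U_def V_def)
  have nz: "u + 2 * v \<noteq> 0" using assms(5) by (simp add: u_def v_def)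
  have nz': "U + 2 * V \<noteq> 0" unfolding U_def V_def using nz
    by (metis of_real_add of_real_eq_0_iff of_real_mult of_real_numeral)
  have e: "(of_real (2 * v / (u + 2 * v)) :: complex) = 2 * V / (U + 2 * V)"
    by (simp add: U_def V_def)
  have "A - center f A B C = of_real (2 * v / (u + 2 * v)) * (A - (B + C) / 2)"
  proof -
    have n2: "U * 2 + V * 4 \<noteq> 0" proof -
      have "U * 2 + V * 4 = 2 * (U + 2 * V)" by simp
      moreover have "2 * (U + 2 * V) \<noteq> 0" using nz' by (metis mult_eq_0_iff zero_neq_numeral)
      ultimately show ?thesis by argo
    qed
    show ?thesis unfolding c e using nz' n2 by (simp add: field_simps mult_2)
  qed
  then have "dist A (center f A B C) = norm (of_real (2 * v / (u + 2 * v)) * (A - (B + C) / 2))"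
    by (simp only: dist_norm)
  also have "\<dots> = \<bar>2 * v / (u + 2 * v)\<bar> * dist A ((B + C) / 2)"
    by (simp only: norm_mult norm_of_real dist_norm)
  finally show ?thesis by (simp only: T_def u_def v_def)
qed

lemma T_nz: "T f a b \<noteq> 0 \<Longrightarrow> f a b b + 2 * f b b a \<noteq> 0"
  by (auto simp: T_def)

theorem theorem3p1:
  fixes A B C :: complex
  assumes "B \<noteq> C"
    and "dist A B = dist A C"
    and "dist A C > dist B C"
  shows "sorted_wrt (<) (map (\<lambda>f. dist A (center f A B C))
           [X20, X22, X8, X3, X9, X10, X21, X2, X5, X12, X17, X1, X13, X7, X6, X4,
            X27, X19, X28, X25, X11, X14, X16, X23])"
proof -
  define a where "a = dist B C"
  define b where "b = dist A C"
  have ab: "0 < a" "a < b" using assms by (auto simp: a_def b_def)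
  have AB: "dist A B = b" "dist C A = b" "dist B C = a"
    using assms by (auto simp: a_def b_def dist_commute)
  define h where "h = dist A ((B + C) / 2)"
  have h: "0 < h"
  proof (rule ccontr)
    assume "\<not> 0 < h"
    then have eq: "A = (B + C) / 2" by (simp add: h_def)
    have AmB: "A - B = (C - B) / 2" unfolding eq by (simp add: field_simps)
    have "dist A B = norm ((C - B) / 2)" by (simp only: dist_norm AmB)
    also have "\<dots> = dist B C / 2" by (simp add: norm_divide dist_norm norm_minus_commute)
    finally have "dist A B = dist B C / 2" .
    then show False using ab AB by simp
  qed
  have key: "dist A (center f A B C) = T f a b * h"
    if "0 < T f a b" "f b a b = f b b a" for f
  proof -
    have "f a b b + 2 * f b b a \<noteq> 0" using that by (intro T_nz) simp
    then have "dist A (center f A B C) = \<bar>T f a b\<bar> * h"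
      unfolding h_def using AB that by (intro center_iso) auto
    then show ?thesis using that by simp
  qed
  have c1: "T X20 a b < T X22 a b" unfolding T20[OF ab] T22[OF ab] by (rule C20_22[OF ab])
  have c2: "T X22 a b < T X8 a b" unfolding T22[OF ab] T8[OF ab] by (rule C22_8[OF ab])
  have c3: "T X8 a b < T X3 a b" unfolding T8[OF ab] T3[OF ab] by (rule C8_3[OF ab])
  have c4: "T X3 a b < T X9 a b" unfolding T3[OF ab] T9[OF ab] by (rule C3_9[OF ab])
  have c5: "T X9 a b < T X10 a b" unfolding T9[OF ab] T10[OF ab] by (rule C9_10[OF ab])
  have c6: "T X10 a b < T X21 a b" unfolding T10[OF ab] T21[OF ab] by (rule C10_21[OF ab])
  have c7: "T X21 a b < T X2 a b" unfolding T21[OF ab] T2[OF ab] by (rule C21_2[OF ab])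
  have c8: "T X2 a b < T X5 a b" unfolding T2[OF ab] T5[OF ab] by (rule C2_5[OF ab])
  have c9: "T X5 a b < T X12 a b" unfolding T5[OF ab] T12[OF ab] by (rule C5_12[OF ab])
  have c10: "T X12 a b < T X17 a b" unfolding T12[OF ab] T17[OF ab] by (rule C12_17[OF ab])
  have c11: "T X17 a b < T X1 a b" unfolding T17[OF ab] T1[OF ab] by (rule C17_1[OF ab])
  have c12: "T X1 a b < T X13 a b" unfolding T1[OF ab] T13[OF ab] by (rule C1_13[OF ab])
  have c13: "T X13 a b < T X7 a b" unfolding T13[OF ab] T7[OF ab] by (rule C13_7[OF ab])
  have c14: "T X7 a b < T X6 a b" unfolding T7[OF ab] T6[OF ab] by (rule C7_6[OF ab])
  have c15: "T X6 a b < T X4 a b" unfolding T6[OF ab] T4[OF ab] by (rule C6_4[OF ab])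
  have c16: "T X4 a b < T X27 a b" unfolding T4[OF ab] T27[OF ab] by (rule C4_27[OF ab])
  have c17: "T X27 a b < T X19 a b" unfolding T27[OF ab] T19[OF ab] by (rule C27_19[OF ab])
  have c18: "T X19 a b < T X28 a b" unfolding T19[OF ab] T28[OF ab] by (rule C19_28[OF ab])
  have c19: "T X28 a b < T X25 a b" unfolding T28[OF ab] T25[OF ab] by (rule C28_25[OF ab])
  have c20: "T X25 a b < T X11 a b" unfolding T25[OF ab] T11[OF ab] by (rule C25_11[OF ab])
  have c21: "T X11 a b < T X14 a b" unfolding T11[OF ab] T14[OF ab] by (rule C11_14[OF ab])
  have c22: "T X14 a b < T X16 a b" unfolding T14[OF ab] T16[OF ab] by (rule C14_16[OF ab])
  have c23: "T X16 a b < T X23 a b" unfolding T16[OF ab] T23[OF ab] by (rule C16_23[OF ab])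
  have p0: "0 < T X20 a b" unfolding T20[OF ab] by (rule P20[OF ab])
  note cs = c1 c2 c3 c4 c5 c6 c7 c8 c9 c10 c11 c12 c13 c14 c15 c16 c17 c18 c19 c20 c21 c22 c23 p0
  have d20: "dist A (center X20 A B C) = T X20 a b * h"
    by (rule key) (use cs in linarith, rule S20[OF ab])
  have d22: "dist A (center X22 A B C) = T X22 a b * h"
    by (rule key) (use cs in linarith, rule S22[OF ab])
  have d8: "dist A (center X8 A B C) = T X8 a b * h"
    by (rule key) (use cs in linarith, rule S8[OF ab])
  have d3: "dist A (center X3 A B C) = T X3 a b * h"
    by (rule key) (use cs in linarith, rule S3[OF ab])
  have d9: "dist A (center X9 A B C) = T X9 a b * h"
    by (rule key) (use cs in linarith, rule S9[OF ab])
  have d10: "dist A (center X10 A B C) = T X10 a b * h"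
    by (rule key) (use cs in linarith, rule S10[OF ab])
  have d21: "dist A (center X21 A B C) = T X21 a b * h"
    by (rule key) (use cs in linarith, rule S21[OF ab])
  have d2: "dist A (center X2 A B C) = T X2 a b * h"
    by (rule key) (use cs in linarith, rule S2[OF ab])
  have d5: "dist A (center X5 A B C) = T X5 a b * h"
    by (rule key) (use cs in linarith, rule S5[OF ab])
  have d12: "dist A (center X12 A B C) = T X12 a b * h"
    by (rule key) (use cs in linarith, rule S12[OF ab])
  have d17: "dist A (center X17 A B C) = T X17 a b * h"
    by (rule key) (use cs in linarith, rule S17[OF ab])
  have d1: "dist A (center X1 A B C) = T X1 a b * h"
    by (rule key) (use cs in linarith, rule S1[OF ab])
  have d13: "dist A (center X13 A B C) = T X13 a b * h"
    by (rule key) (use cs in linarith, rule S13[OF ab])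
  have d7: "dist A (center X7 A B C) = T X7 a b * h"
    by (rule key) (use cs in linarith, rule S7[OF ab])
  have d6: "dist A (center X6 A B C) = T X6 a b * h"
    by (rule key) (use cs in linarith, rule S6[OF ab])
  have d4: "dist A (center X4 A B C) = T X4 a b * h"
    by (rule key) (use cs in linarith, rule S4[OF ab])
  have d27: "dist A (center X27 A B C) = T X27 a b * h"
    by (rule key) (use cs in linarith, rule S27[OF ab])
  have d19: "dist A (center X19 A B C) = T X19 a b * h"
    by (rule key) (use cs in linarith, rule S19[OF ab])
  have d28: "dist A (center X28 A B C) = T X28 a b * h"
    by (rule key) (use cs in linarith, rule S28[OF ab])
  have d25: "dist A (center X25 A B C) = T X25 a b * h"
    by (rule key) (use cs in linarith, rule S25[OF ab])
  have d11: "dist A (center X11 A B C) = T X11 a b * h"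
    by (rule key) (use cs in linarith, rule S11[OF ab])
  have d14: "dist A (center X14 A B C) = T X14 a b * h"
    by (rule key) (use cs in linarith, rule S14[OF ab])
  have d16: "dist A (center X16 A B C) = T X16 a b * h"
    by (rule key) (use cs in linarith, rule S16[OF ab])
  have d23: "dist A (center X23 A B C) = T X23 a b * h"
    by (rule key) (use cs in linarith, rule S23[OF ab])
  note d = d20 d22 d8 d3 d9 d10 d21 d2 d5 d12 d17 d1 d13 d7 d6 d4 d27 d19 d28 d25 d11 d14 d16 d23
  have m: "x < y \<Longrightarrow> x * h < y * h" for x y using h by simp
  show ?thesis
    unfolding list.map d
    by (simp only: sorted_wrt2[OF transp_on_less] sorted_wrt1 simp_thms)
       (intro conjI m cs)
qed

end
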